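(* Let $\mathbf{a}_1,\mathbf{a}_2\in G(t)$ with $\mathbf{a}_1\mathbf{a}_2\neq\mathbf{a}_2\mathbf{a}_1$. Then for any $t_{13},t_{23}\in\mathbb{C}$ with $t_{13}\notin\{t_{23},\,t^2-t_{23}\}$, there exists $\mathbf{a}_3\in G(t)$ such that $\mathrm{tr}(\mathbf{a}_1\mathbf{a}_3)=t_{13}$ and $\mathrm{tr}(\mathbf{a}_2\mathbf{a}_3)=t_{23}$.
   Context: $G=\mathrm{SL}(2,\mathbb{C})$ and, for $t\in\mathbb{C}$, $G(t)=\{\mathbf{x}\in G:\mathrm{tr}(\mathbf{x})=t\}$. *)

theory Defs
  imports "HOL-Analysis.Analysis"
begin

type_synonym cmat2 = "complex ^ 2 ^ 2"

definition tr :: "cmat2 \<Rightarrow> complex" where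
  "tr A = (\<Sum>i\<in>UNIV. A $ i $ i)"

definition SL2 :: "cmat2 set" where
  "SL2 = {A. det A = 1}"

definition Gt :: "complex \<Rightarrow> cmat2 set" where
  "Gt t = {A \<in> SL2. tr A = t}"

end

theory Submission
  imports Defs
begin

lemma par_U:
  fixes u1 u2 u3 r1 r2 r3 :: complex
  assumes H0: "2* u1* r1 + u2* r3 + u3* r2 = 0" and QU: "u1* u1 + u2* u3 = 0"
  shows "u1*(u1* r2 - u2* r1) = u2*(u1* r1+u2* r3)"
    "u1*(u3* r1 - u1* r3) = u3*(u1* r1+u2* r3)"
    "u2*(u3* r1 - u1* r3) = u3*(u1* r2 - u2* r1)"
proof -
  have "u1*(u1* r2 - u2* r1) - u2*(u1* r1+u2* r3) = r2*(u1* u1 + u2* u3) - u2*(2* u1* r1 + u2* r3 + u3* r2)" by algebra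
  then show "u1*(u1* r2 - u2* r1) = u2*(u1* r1+u2* r3)" using H0 QU by simp
  have "u1*(u3* r1 - u1* r3) - u3*(u1* r1+u2* r3) = -r3*(u1* u1 + u2* u3)" by algebra
  then show "u1*(u3* r1 - u1* r3) = u3*(u1* r1+u2* r3)" using QU by simp
  have "u2*(u3* r1 - u1* r3) - u3*(u1* r2 - u2* r1) = u2* u3* r1 - u1* u2* r3 - u1* u3* r2 + u2* u3* r1" by algebra
  also have "\<dots> = - u1*(2* u1* r1 + u2* r3 + u3* r2) + 2* r1*(u1* u1 + u2* u3)" by algebra
  finally show "u2*(u3* r1 - u1* r3) = u3*(u1* r2 - u2* r1)" using H0 QU by simp
qed

lemma QN:
  fixes u1 u2 u3 r1 r2 r3 :: complex
  assumes H0: "2* u1* r1 + u2* r3 + u3* r2 = 0"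
  shows "(u1* r1+u2* r3)^2 + (u1* r2 - u2* r1)*(u3* r1 - u1* r3) = - (u1* u1 + u2* u3)*(r1* r1+r2* r3)"
  using H0 by algebra


lemma par_V:
  fixes u1 u2 u3 r1 r2 r3 :: complex
  assumes H0: "2* u1* r1 + u2* r3 + u3* r2 = 0" and QV: "r1* r1 + r2* r3 = 0"
  shows "r1*(u1* r2 - u2* r1) = r2*(u1* r1+u2* r3)"
    "r1*(u3* r1 - u1* r3) = r3*(u1* r1+u2* r3)"
    "r2*(u3* r1 - u1* r3) = r3*(u1* r2 - u2* r1)"
  using H0 QV by algebra+

lemma proj_lemma:
  fixes u1 u2 u3 n1 n2 n3 x y z t P :: complex
  assumes "u1* n2 = u2* n1" "u1* n3 = u3* n1" "u2* n3 = u3* n2"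
    and P: "u1*(2* x-t) + u3* y + u2* z = P"
    and B: "n1*(2* x-t) + y* n3 + z* n2 = 0"
    and nz: "n1 \<noteq> 0 \<or> n2 \<noteq> 0 \<or> n3 \<noteq> 0"
  shows "P = 0"
proof -
  have "n1 * P = u1 * (n1*(2* x-t) + y* n3 + z* n2)" unfolding P[symmetric] using assms(1,2,3) by algebra
  moreover have "n2 * P = u2 * (n1*(2* x-t) + y* n3 + z* n2)" unfolding P[symmetric] using assms(1,2,3) by algebra
  moreover have "n3 * P = u3 * (n1*(2* x-t) + y* n3 + z* n2)" unfolding P[symmetric] using assms(1,2,3) by algebra
  ultimately show ?thesis using B nz by auto
qed

lemma key:
  fixes a b c e f g t t13 t23 x y z :: complex
  assumes dA: "a*(t-a) - b* c = 1" and dB: "e*(t-e) - f* g = 1"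
    and L1: "(2* a-t)* x + c* y + b* z = t13 - (t-a)* t"
    and L2: "(2* e-t)* x + g* y + f* z = t23 - (t-e)* t"
    and alpha: "(c* f - b* g)^2 + (b*(2* e-t) - (2* a-t)* f)*((2* a-t)* g - c*(2* e-t)) = 0"
    and beta: "(c* f - b* g)*(t - 2* x) - y*((2* a-t)* g - c*(2* e-t)) - z*(b*(2* e-t) - (2* a-t)* f) = 0"
    and Knz: "c* f - b* g \<noteq> 0 \<or> b*(2* e-t) - (2* a-t)* f \<noteq> 0 \<or> (2* a-t)* g - c*(2* e-t) \<noteq> 0"
  shows "t13 = t23 \<or> t13 + t23 = t^2"
proof -
  define u1 u2 u3 r1 r2 r3 where "u1 = a - e" "u2 = b - f" "u3 = c - g"
    "r1 = a + e - t" "r2 = b + f" "r3 = c + g"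
  define n1 n2 n3 where "n1 = u1* r1+u2* r3" "n2 = u1* r2 - u2* r1" "n3 = u3* r1 - u1* r3"
  have H0: "2* u1* r1 + u2* r3 + u3* r2 = 0"
    using dA dB unfolding u1_u2_u3_r1_r2_r3_def by algebra
  have k1: "c* f - b* g = - n1" using dA dB unfolding n1_n2_n3_def u1_u2_u3_r1_r2_r3_def by algebra
  have k2: "b*(2* e-t) - (2* a-t)* f = - n2" unfolding n1_n2_n3_def u1_u2_u3_r1_r2_r3_def by algebra
  have k3: "(2* a-t)* g - c*(2* e-t) = - n3" unfolding n1_n2_n3_def u1_u2_u3_r1_r2_r3_def by algebra
  have nz: "n1 \<noteq> 0 \<or> n2 \<noteq> 0 \<or> n3 \<noteq> 0" using Knz k1 k2 k3 by auto
  have B: "n1*(2* x-t) + y* n3 + z* n2 = 0" using beta unfolding k1 k2 k3 by (simp add: algebra_simps)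
  have Pu: "u1*(2* x-t) + u3* y + u2* z = t13 - t23"
    using L1 L2 unfolding u1_u2_u3_r1_r2_r3_def by algebra
  have Pv: "r1*(2* x-t) + r3* y + r2* z = t13 + t23 - t^2"
    using L1 L2 unfolding u1_u2_u3_r1_r2_r3_def by algebra
  have n0: "n1^2 + n2* n3 = 0" using alpha unfolding k1 k2 k3 by simp
  have q: "n1^2+n2* n3 = - (u1* u1 + u2* u3)*(r1* r1+r2* r3)" using QN[OF H0] unfolding n1_n2_n3_def .
  have "(u1* u1 + u2* u3)*(r1* r1+r2* r3) = 0" using q n0 by (metis minus_mult_left neg_equal_0_iff_equal)
  then consider "u1* u1 + u2* u3 = 0" | "r1* r1+r2* r3 = 0" using mult_eq_0_iff by blast
  then show ?thesis
  proof cases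
    case 1
    note p = par_U[OF H0 1, folded n1_n2_n3_def]
    have "t13 - t23 = 0" by (rule proj_lemma[OF p Pu B nz])
    then show ?thesis by simp
  next
    case 2
    note p = par_V[OF H0 2, folded n1_n2_n3_def]
    have "t13 + t23 - t^2 = 0" by (rule proj_lemma[OF p Pv B nz])
    then show ?thesis by simp
  qed
qed

lemma quad_root:
  fixes A B C :: complex
  assumes "A \<noteq> 0 \<or> B \<noteq> 0"
  shows "\<exists>s. A* s^2 + B* s + C = 0"
proof (cases "A = 0")
  case True
  then have "B \<noteq> 0" using assms by simp
  then show ?thesis using True by (intro exI[of _ "-C/B"]) (simp add: field_simps)
next
  case False
  define r where "r = csqrt (B^2 - 4* A* C)"
  have r2: "r^2 = B^2 - 4* A* C" unfolding r_def by simp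
  have "A*((-B + r)/(2* A))^2 + B*((-B + r)/(2* A)) + C = (r^2 - (B^2 - 4* A* C))/(4* A)"
    using False by (simp add: field_simps power2_eq_square)
  then show ?thesis using r2 by (intro exI[of _ "(-B + r)/(2* A)"]) simp
qed

lemma cnj_sum_nz:
  fixes K1 K2 K3 :: complex
  assumes "K1 \<noteq> 0 \<or> K2 \<noteq> 0 \<or> K3 \<noteq> 0"
  shows "K1* cnj K1 + K2* cnj K2 + K3* cnj K3 \<noteq> 0"
proof -
  have e: "K1* cnj K1 + K2* cnj K2 + K3* cnj K3 = complex_of_real ((cmod K1)^2 + (cmod K2)^2 + (cmod K3)^2)"
    unfolding of_real_add complex_norm_square by (rule refl)
  have "(cmod K1)^2 + (cmod K2)^2 + (cmod K3)^2 > 0"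
    using assms by (auto simp: add_pos_nonneg add_nonneg_pos)
  then show ?thesis unfolding e by (metis less_irrefl of_real_eq_0_iff)
qed

lemma exist_sc:
  fixes a b c d e f g h t t13 t23 :: complex
  assumes dd: "d = t - a" and hh: "h = t - e" and dA: "a* d - b* c = 1" and dB: "e* h - f* g = 1"
    and Knz: "c* f - b* g \<noteq> 0 \<or> b*(2* e-t) - (2* a-t)* f \<noteq> 0 \<or> (2* a-t)* g - c*(2* e-t) \<noteq> 0"
    and n1: "t13 \<noteq> t23" and n2: "t13 \<noteq> t^2 - t23"
  shows "\<exists>x y z w. x + w = t \<and> x* w - y* z = 1 \<and> a* x + b* z + c* y + d* w = t13 \<and> e* x + f* z + g* y + h* w = t23"
proof -
  define K1 K2 K3 where "K1 = c* f - b* g" "K2 = b*(2* e-t) - (2* a-t)* f" "K3 = (2* a-t)* g - c*(2* e-t)"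
  define k1 k2 k3 where "k1 = cnj K1" "k2 = cnj K2" "k3 = cnj K3"
  define D where "D = K1* k1 + K2* k2 + K3* k3"
  have Dnz: "D \<noteq> 0" unfolding D_def k1_k2_k3_def using cnj_sum_nz Knz unfolding K1_K2_K3_def by blast
  define p1 p2 where "p1 = t13 - (t-a)* t" "p2 = t23 - (t-e)* t"
  define X Y Z where "X = p1*(g* k3 - f* k2) - p2*(c* k3 - b* k2)"
    "Y = p1*(f* k1 - (2* e-t)* k3) - p2*(b* k1 - (2* a-t)* k3)"
    "Z = p1*((2* e-t)* k2 - g* k1) - p2*((2* a-t)* k2 - c* k1)"
  have E1: "(2* a-t)* X + c* Y + b* Z = p1* D"
    unfolding X_Y_Z_def D_def K1_K2_K3_def by algebra
  have E2: "(2* e-t)* X + g* Y + f* Z = p2* D"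
    unfolding X_Y_Z_def D_def K1_K2_K3_def by algebra
  define x0 y0 z0 where "x0 = X/D" "y0 = Y/D" "z0 = Z/D"
  have L1: "(2* a-t)* x0 + c* y0 + b* z0 = p1"
  proof -
    have "(2* a-t)* x0 + c* y0 + b* z0 = ((2* a-t)* X + c* Y + b* Z)/D"
      unfolding x0_y0_z0_def using Dnz by (simp add: field_simps)
    then show ?thesis using E1 Dnz by simp
  qed
  have L2: "(2* e-t)* x0 + g* y0 + f* z0 = p2"
  proof -
    have "(2* e-t)* x0 + g* y0 + f* z0 = ((2* e-t)* X + g* Y + f* Z)/D"
      unfolding x0_y0_z0_def using Dnz by (simp add: field_simps)
    then show ?thesis using E2 Dnz by simp
  qed
  have uK1: "(2* a-t)* K1 + c* K2 + b* K3 = 0" unfolding K1_K2_K3_def by algebra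
  have uK2: "(2* e-t)* K1 + g* K2 + f* K3 = 0" unfolding K1_K2_K3_def by algebra
  define al be ga where "al = -(K1^2 + K2* K3)" "be = K1*(t - 2* x0) - y0* K3 - z0* K2"
    "ga = x0*(t-x0) - y0* z0 - 1"
  have "al \<noteq> 0 \<or> be \<noteq> 0"
  proof (rule ccontr)
    assume "\<not> (al \<noteq> 0 \<or> be \<noteq> 0)"
    then have "al = 0" "be = 0" by auto
    have h1: "a*(t-a) - b* c = 1" using dA dd by simp
    have h2: "e*(t-e) - f* g = 1" using dB hh by simp
    have h3: "(2* a-t)* x0 + c* y0 + b* z0 = t13 - (t-a)* t" using L1 unfolding p1_p2_def .
    have h4: "(2* e-t)* x0 + g* y0 + f* z0 = t23 - (t-e)* t" using L2 unfolding p1_p2_def .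
    have h5: "(c* f - b* g)^2 + (b*(2* e-t) - (2* a-t)* f)*((2* a-t)* g - c*(2* e-t)) = 0"
      using \<open>al = 0\<close> unfolding al_be_ga_def K1_K2_K3_def by algebra
    have h6: "(c* f - b* g)*(t - 2* x0) - y0*((2* a-t)* g - c*(2* e-t)) - z0*(b*(2* e-t) - (2* a-t)* f) = 0"
      using \<open>be = 0\<close> unfolding al_be_ga_def K1_K2_K3_def by simp
    have "t13 = t23 \<or> t13 + t23 = t^2" by (rule key[OF h1 h2 h3 h4 h5 h6 Knz])
    then show False using n1 n2 by (auto simp: algebra_simps)
  qed
  then obtain s where s: "al* s^2 + be* s + ga = 0" using quad_root by blast
  define x y z where "x = x0 + s* K1" "y = y0 + s* K2" "z = z0 + s* K3"
  show ?thesis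
  proof (intro exI conjI)
    show "x + (t - x) = t" by simp
    have "x*(t-x) - y* z - 1 = al* s^2 + be* s + ga" unfolding x_y_z_def al_be_ga_def by algebra
    then show "x*(t-x) - y* z = 1" using s by simp
    have "(2* a-t)* x + c* y + b* z = ((2* a-t)* x0 + c* y0 + b* z0) + s*((2* a-t)* K1 + c* K2 + b* K3)"
      unfolding x_y_z_def by (simp add: algebra_simps)
    then have "(2* a-t)* x + c* y + b* z = p1" using L1 uK1 by simp
    then show "a* x + b* z + c* y + d*(t-x) = t13" unfolding dd p1_p2_def by algebra
    have "(2* e-t)* x + g* y + f* z = ((2* e-t)* x0 + g* y0 + f* z0) + s*((2* e-t)* K1 + g* K2 + f* K3)"
      unfolding x_y_z_def by (simp add: algebra_simps)
    then have "(2* e-t)* x + g* y + f* z = p2" using L2 uK2 by simp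
    then show "e* x + f* z + g* y + h*(t-x) = t23" unfolding hh p1_p2_def by algebra
  qed
qed

lemma tr2: "tr A = A$1$1 + A$2$2" unfolding tr_def by (simp add: sum_2)

lemma mm2: "(A ** B) $ i $ j = A$i$1 * B$1$j + A$i$2 * B$2$j" for A B :: cmat2
  by (simp add: matrix_matrix_mult_def sum_2)

theorem mainTheorem2:
  fixes t t13 t23 :: complex and a1 a2 :: cmat2
  assumes "a1 \<in> Gt t" and "a2 \<in> Gt t"
    and "a1 ** a2 \<noteq> a2 ** a1"
    and "t13 \<noteq> t23" and "t13 \<noteq> t^2 - t23"
  shows "\<exists>a3 \<in> Gt t. tr (a1 ** a3) = t13 \<and> tr (a2 ** a3) = t23"
proof -
  define a b c d where "a = a1$1$1" "b = a1$1$2" "c = a1$2$1" "d = a1$2$2"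
  define e f g h where "e = a2$1$1" "f = a2$1$2" "g = a2$2$1" "h = a2$2$2"
  have dA: "a* d - b* c = 1" using assms(1) unfolding Gt_def SL2_def a_b_c_d_def by (simp add: det_2)
  have dB: "e* h - f* g = 1" using assms(2) unfolding Gt_def SL2_def e_f_g_h_def by (simp add: det_2)
  have dd: "d = t - a" using assms(1) unfolding Gt_def a_b_c_d_def by (auto simp: tr2 eq_diff_eq)
  have hh: "h = t - e" using assms(2) unfolding Gt_def e_f_g_h_def by (auto simp: tr2 eq_diff_eq)
  have Knz: "c* f - b* g \<noteq> 0 \<or> b*(2* e-t) - (2* a-t)* f \<noteq> 0 \<or> (2* a-t)* g - c*(2* e-t) \<noteq> 0"
  proof (rule ccontr)
    assume "\<not> ?thesis"
    then have z: "c* f - b* g = 0" "b*(2* e-t) - (2* a-t)* f = 0" "(2* a-t)* g - c*(2* e-t) = 0" by auto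
    have "a1 ** a2 = a2 ** a1"
      unfolding vec_eq_iff forall_2 mm2
      unfolding a_b_c_d_def[symmetric] e_f_g_h_def[symmetric]
      using z dd hh by algebra
    then show False using assms(3) by simp
  qed
  obtain x y z w where s: "x + w = t" "x* w - y* z = 1" "a* x + b* z + c* y + d* w = t13"
      "e* x + f* z + g* y + h* w = t23"
    using exist_sc[OF dd hh dA dB Knz assms(4,5)] by blast
  define a3 :: cmat2 where "a3 = vector [vector [x, y], vector [z, w]]"
  have e3: "a3$1$1 = x" "a3$1$2 = y" "a3$2$1 = z" "a3$2$2 = w" unfolding a3_def by simp_all
  show ?thesis
  proof (intro bexI conjI)
    show "a3 \<in> Gt t" unfolding Gt_def SL2_def using s by (simp add: det_2 tr2 e3)
    show "tr (a1 ** a3) = t13" using s unfolding tr2 mm2 e3 a_b_c_d_def[symmetric]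
      by (simp add: algebra_simps)
    show "tr (a2 ** a3) = t23" using s unfolding tr2 mm2 e3 e_f_g_h_def[symmetric]
      by (simp add: algebra_simps)
  qed
qed

end
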